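(* Let $L$ be a Lie conformal superalgebra with $Z_L(L')=0$, where $L'$ is the derived subalgebra of $L$, and let $A$ be an associative commutative algebra with unity. If every linear super-commuting map on $L$ belongs to $\mathrm{Cent}(L)$, then every linear super-commuting map on the current Lie conformal superalgebra $L\otimes A$ belongs to $\mathrm{Cent}(L\otimes A)$.
   Context: A Lie conformal superalgebra is a $\mathbb{Z}_2$-graded $\mathbb{C}[\partial]$-module with a $\mathbb{C}$-linear $\lambda$-bracket into $\mathbb{C}[\lambda]\otimes L$ satisfying $[\partial x_\lambda y]=-\lambda[x_\lambda y]$, $[x_\lambda\partial y]=(\partial+\lambda)[x_\lambda y]$, $[x_\lambda y]=-(-1)^{|x||y|}[y_{-\lambda-\partial}x]$, $[x_\lambda[y_\mu z]]=[[x_\lambda y]_{\lambda+\mu}z]+(-1)^{|x||y|}[y_\mu[x_\lambda z]]$. The derived subalgebra $L'$ is the span of all coefficients of brackets $[x_\lambda y]$, $x,y\in L$. For $S\subseteq L$, the centralizer is $Z_L(S)=\{x\in L:[x_\lambda y]=0\ \forall y\in S\}$. The current Lie conformal superalgebra $L\otimes A$ has grading $|x\otimes a|=|x|$, $\partial(x\otimes a)=\partial x\otimes a$, and bracket $[(x\otimes a)_\lambda(y\otimes b)]=[x_\lambda y]\otimes ab$. A super-commuting map on a Lie conformal superalgebra $\mathcal L$ is a map $\Psi_\lambda:\mathcal L\to\mathbb{C}[\lambda]\otimes\mathcal L$, homogeneous of degree $|\Psi|$, with $[\Psi_\lambda(u)_{\lambda+\mu}u]=0$ for all $u\in\mathcal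 L$. The centroid $\mathrm{Cent}(\mathcal L)$ consists of linear maps $\alpha_\lambda:\mathcal L\to\mathbb{C}[\lambda]\otimes\mathcal L$ of degree $|\alpha|$ with $\alpha_\lambda([x_\mu y])=(-1)^{|x||\alpha|}[x_\mu\alpha_\lambda(y)]=[\alpha_\lambda(x)_\mu y]$ for all homogeneous $x,y$. *)

theory Defs
  imports "HOL-Computational_Algebra.Polynomial"
begin

text \<open>
A complex vector space is a type with an addition together with a scalar
multiplication s :: complex => 'v => 'v satisfying the locale vector_space s.
The space C[lambda] (x) V is represented by the polynomial type 'v poly
(coeff P n = coefficient of lambda^n).  Elements of C[lambda,mu] (x) V are represented by
their coefficient functions nat => nat => 'v (entry n m = coefficient of lambda^n mu^m).
The Z2-grading is a function g :: bool => 'v set, g False = even part, g True = odd part;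
parities add via (~=).
\<close>

definition psign :: "bool \<Rightarrow> bool \<Rightarrow> complex" where
  "psign i j = (if i \<and> j then -1 else 1)"

definition lin_to_poly ::
  "(complex \<Rightarrow> 'v::ab_group_add \<Rightarrow> 'v) \<Rightarrow> (complex \<Rightarrow> 'w::ab_group_add \<Rightarrow> 'w)
     \<Rightarrow> ('v \<Rightarrow> 'w poly) \<Rightarrow> bool" where
  "lin_to_poly s1 s2 f \<longleftrightarrow>
     (\<forall>x y. f (x + y) = f x + f y) \<and> (\<forall>c x. f (s1 c x) = map_poly (s2 c) (f x))"

text \<open>Coefficients of [P_{lambda+mu} z] in C[lambda,mu] (x) V, for P in C[lambda] (x) V:
  writing P = sum_k lambda^k p_k and [p_k nu z] = sum_j nu^j q_kj, one has
  [P_{lambda+mu} z] = sum_{k,j} lambda^k (lambda+mu)^j q_kj.\<close>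
definition br_shift ::
  "(complex \<Rightarrow> 'v::ab_group_add \<Rightarrow> 'v) \<Rightarrow> ('v \<Rightarrow> 'v \<Rightarrow> 'v poly) \<Rightarrow> 'v poly \<Rightarrow> 'v
     \<Rightarrow> nat \<Rightarrow> nat \<Rightarrow> 'v" where
  "br_shift s br P z n m =
     (\<Sum>k\<le>n. s (of_nat ((n - k + m) choose m)) (coeff (br (coeff P k) z) (n - k + m)))"

text \<open>Coefficient of lambda^k in sum_j (-lambda-D)^j p_j, where P = sum_j lambda^j p_j.\<close>
definition subst_neg_lam_D ::
  "(complex \<Rightarrow> 'v::ab_group_add \<Rightarrow> 'v) \<Rightarrow> ('v \<Rightarrow> 'v) \<Rightarrow> 'v poly \<Rightarrow> nat \<Rightarrow> 'v" where
  "subst_neg_lam_D s D P k =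
     (\<Sum>j\<in>{k..degree P}. s ((-1) ^ j * of_nat (j choose k)) ((D ^^ (j - k)) (coeff P j)))"

definition lie_conf_superalg ::
  "(complex \<Rightarrow> 'v::ab_group_add \<Rightarrow> 'v) \<Rightarrow> ('v \<Rightarrow> 'v) \<Rightarrow> (bool \<Rightarrow> 'v set)
     \<Rightarrow> ('v \<Rightarrow> 'v \<Rightarrow> 'v poly) \<Rightarrow> bool" where
  "lie_conf_superalg s D g br \<longleftrightarrow>
     vector_space s \<and>
     Vector_Spaces.linear s s D \<and>
     \<comment> \<open>Z2-graded C[D]-module\<close>
     module.subspace s (g False) \<and> module.subspace s (g True) \<and>
     g False \<inter> g True = {0} \<and>
     (\<forall>x. \<exists>x0\<in>g False. \<exists>x1\<in>g True. x = x0 + x1) \<and>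
     (\<forall>i. \<forall>x\<in>g i. D x \<in> g i) \<and>
     \<comment> \<open>the bracket is C-bilinear and respects the grading\<close>
     (\<forall>x. lin_to_poly s s (br x)) \<and>
     (\<forall>y. lin_to_poly s s (\<lambda>x. br x y)) \<and>
     (\<forall>i j. \<forall>x\<in>g i. \<forall>y\<in>g j. \<forall>n. coeff (br x y) n \<in> g (i \<noteq> j)) \<and>
     \<comment> \<open>[D x_lambda y] = - lambda [x_lambda y]\<close>
     (\<forall>x y. br (D x) y = - pCons 0 (br x y)) \<and>
     \<comment> \<open>[x_lambda D y] = (D + lambda) [x_lambda y]\<close>
     (\<forall>x y. br x (D y) = map_poly D (br x y) + pCons 0 (br x y)) \<and>
     \<comment> \<open>skew-symmetry [x_lambda y] = -(-1)^{|x||y|} [y_{-lambda-D} x]\<close>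
     (\<forall>i j. \<forall>x\<in>g i. \<forall>y\<in>g j. \<forall>k.
        coeff (br x y) k = - s (psign i j) (subst_neg_lam_D s D (br y x) k)) \<and>
     \<comment> \<open>Jacobi identity, compared coefficientwise in lambda^n mu^m\<close>
     (\<forall>i j. \<forall>x\<in>g i. \<forall>y\<in>g j. \<forall>z n m.
        coeff (br x (coeff (br y z) m)) n =
          br_shift s br (br x y) z n m + s (psign i j) (coeff (br y (coeff (br x z) n)) m))"

definition derived ::
  "(complex \<Rightarrow> 'v::ab_group_add \<Rightarrow> 'v) \<Rightarrow> ('v \<Rightarrow> 'v \<Rightarrow> 'v poly) \<Rightarrow> 'v set" where
  "derived s br = module.span s {coeff (br x y) n | x y n. True}"

definition centralizer :: "('v::zero \<Rightarrow> 'v \<Rightarrow> 'v poly) \<Rightarrow> 'v set \<Rightarrow> 'v set" where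
  "centralizer br S = {x. \<forall>y\<in>S. br x y = 0}"

definition homog_deg :: "(bool \<Rightarrow> 'v set) \<Rightarrow> bool \<Rightarrow> ('v \<Rightarrow> 'v::zero poly) \<Rightarrow> bool" where
  "homog_deg g d f \<longleftrightarrow> (\<forall>i. \<forall>x\<in>g i. \<forall>n. coeff (f x) n \<in> g (i \<noteq> d))"

text \<open>Linear super-commuting map of degree d: [Psi_lambda(u)_{lambda+mu} u] = 0 for all u.\<close>
definition super_commuting ::
  "(complex \<Rightarrow> 'v::ab_group_add \<Rightarrow> 'v) \<Rightarrow> (bool \<Rightarrow> 'v set) \<Rightarrow> ('v \<Rightarrow> 'v \<Rightarrow> 'v poly)
     \<Rightarrow> bool \<Rightarrow> ('v \<Rightarrow> 'v poly) \<Rightarrow> bool" where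
  "super_commuting s g br d Psi \<longleftrightarrow>
     lin_to_poly s s Psi \<and> homog_deg g d Psi \<and>
     (\<forall>u n m. br_shift s br (Psi u) u n m = 0)"

text \<open>Element of the centroid of degree d:
  alpha_lambda([x_mu y]) = (-1)^{|x||alpha|} [x_mu alpha_lambda(y)] = [alpha_lambda(x)_mu y],
  compared coefficientwise in lambda^n mu^m.\<close>
definition in_centroid ::
  "(complex \<Rightarrow> 'v::ab_group_add \<Rightarrow> 'v) \<Rightarrow> (bool \<Rightarrow> 'v set) \<Rightarrow> ('v \<Rightarrow> 'v \<Rightarrow> 'v poly)
     \<Rightarrow> bool \<Rightarrow> ('v \<Rightarrow> 'v poly) \<Rightarrow> bool" where
  "in_centroid s g br d \<alpha> \<longleftrightarrow>
     lin_to_poly s s \<alpha> \<and> homog_deg g d \<alpha> \<and>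
     (\<forall>i j. \<forall>x\<in>g i. \<forall>y\<in>g j. \<forall>n m.
        coeff (\<alpha> (coeff (br x y) m)) n = s (psign i d) (coeff (br x (coeff (\<alpha> y) n)) m) \<and>
        coeff (\<alpha> (coeff (br x y) m)) n = coeff (br (coeff (\<alpha> x) n) y) m)"

definition comm_algebra :: "(complex \<Rightarrow> 'a::comm_ring_1 \<Rightarrow> 'a) \<Rightarrow> bool" where
  "comm_algebra s \<longleftrightarrow> vector_space s \<and> (\<forall>c a b. s c (a * b) = s c a * b)"

definition tensor_product ::
  "(complex \<Rightarrow> 'l::ab_group_add \<Rightarrow> 'l) \<Rightarrow> (complex \<Rightarrow> 'a::ab_group_add \<Rightarrow> 'a)
     \<Rightarrow> (complex \<Rightarrow> 't::ab_group_add \<Rightarrow> 't) \<Rightarrow> ('l \<Rightarrow> 'a \<Rightarrow> 't) \<Rightarrow> bool" where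
  "tensor_product sL sA sT tens \<longleftrightarrow>
     vector_space sL \<and> vector_space sA \<and> vector_space sT \<and>
     (\<forall>x. Vector_Spaces.linear sA sT (tens x)) \<and>
     (\<forall>a. Vector_Spaces.linear sL sT (\<lambda>x. tens x a)) \<and>
     module.span sT {tens x a | x a. True} = UNIV \<and>
     (\<forall>f :: 'l \<Rightarrow> 'a \<Rightarrow> complex.
        (\<forall>x. Vector_Spaces.linear sA (*) (f x)) \<and> (\<forall>a. Vector_Spaces.linear sL (*) (\<lambda>x. f x a))
        \<longrightarrow> (\<exists>h. Vector_Spaces.linear sT (*) h \<and> (\<forall>x a. h (tens x a) = f x a)))"

definition current_grading ::
  "(complex \<Rightarrow> 't::ab_group_add \<Rightarrow> 't) \<Rightarrow> ('l \<Rightarrow> 'a \<Rightarrow> 't) \<Rightarrow> (bool \<Rightarrow> 'l set) \<Rightarrow> bool \<Rightarrow> 't set" where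
  "current_grading sT tens g i = module.span sT {tens x a | x a. x \<in> g i}"

definition current_structure ::
  "(complex \<Rightarrow> 'l::ab_group_add \<Rightarrow> 'l) \<Rightarrow> ('l \<Rightarrow> 'l) \<Rightarrow> ('l \<Rightarrow> 'l \<Rightarrow> 'l poly)
     \<Rightarrow> (complex \<Rightarrow> 't::ab_group_add \<Rightarrow> 't) \<Rightarrow> ('l \<Rightarrow> 'a::comm_ring_1 \<Rightarrow> 't)
     \<Rightarrow> ('t \<Rightarrow> 't) \<Rightarrow> ('t \<Rightarrow> 't \<Rightarrow> 't poly) \<Rightarrow> bool" where
  "current_structure sL D br sT tens DT brT \<longleftrightarrow>
     Vector_Spaces.linear sT sT DT \<and>
     (\<forall>x a. DT (tens x a) = tens (D x) a) \<and>
     (\<forall>u. lin_to_poly sT sT (brT u)) \<and>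
     (\<forall>v. lin_to_poly sT sT (\<lambda>u. brT u v)) \<and>
     (\<forall>x a y b. brT (tens x a) (tens y b) = map_poly (\<lambda>c. tens c (a * b)) (br x y))"

end

theory Submission
  imports Defs
begin


lemma vs_mult: "vector_space ((*) :: complex \<Rightarrow> complex \<Rightarrow> complex)"
  by (unfold_locales) (auto simp: algebra_simps)

lemma sep_fun:
  assumes "vector_space s" "x \<noteq> 0"
  shows "\<exists>\<phi>. Vector_Spaces.linear s (*) \<phi> \<and> \<phi> x \<noteq> (0::complex)"
proof -
  interpret v: vector_space s by fact
  have "v.independent {x}" using assms(2) v.independent_insertI[of x "{}"] by auto
  then obtain B where B: "{x} \<subseteq> B" "v.independent B" "UNIV \<subseteq> v.span B"
    using v.maximal_independent_subset_extend[of "{x}" UNIV] by auto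
  then have sp: "v.span B = UNIV" by auto
  have "Vector_Spaces.linear s (*) (\<lambda>w. v.representation B w x)" by (rule v.linear_representation[OF B(2) sp])
  moreover have "v.representation B x x = 1" using v.representation_basis[OF B(2)] B(1) by auto
  ultimately show ?thesis by (intro exI[of _ "\<lambda>w. v.representation B w x"]) auto
qed

lemma lin_eq_span:
  assumes "Vector_Spaces.linear s1 s2 f" "Vector_Spaces.linear s1 s2 h" "\<And>x. x \<in> S \<Longrightarrow> f x = h x" "u \<in> module.span s1 S"
  shows "f u = h u"
proof -
  interpret v: vector_space s1 using assms(1) by (simp add: Vector_Spaces.linear_iff)
  from assms(4) show ?thesis
  proof (induct rule: v.span_induct_alt)
    case base then show ?case using assms(1,2) by (simp add: Vector_Spaces.linear_iff) (metis add_cancel_right_left)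
  next
    case (step c x y) then show ?case using assms by (simp add: Vector_Spaces.linear_iff)
  qed
qed

lemma lin_shift:
  assumes "vector_space sA" "\<And>c a b. sA c (a * b) = sA c a * b" "Vector_Spaces.linear sA (*) g"
  shows "Vector_Spaces.linear sA (*) (\<lambda>t. g (t * (b::'a::comm_ring_1)))"
  using assms unfolding Vector_Spaces.linear_iff by (auto simp: distrib_right assms(2)[symmetric])

locale cur =
  fixes sL :: "complex \<Rightarrow> 'l::ab_group_add \<Rightarrow> 'l" and sA :: "complex \<Rightarrow> 'a::comm_ring_1 \<Rightarrow> 'a"
    and sT :: "complex \<Rightarrow> 't::ab_group_add \<Rightarrow> 't" and tens :: "'l \<Rightarrow> 'a \<Rightarrow> 't"
  assumes vsL: "vector_space sL" and vsA: "vector_space sA" and vsT: "vector_space sT"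
    and tl1: "\<And>x. Vector_Spaces.linear sA sT (tens x)" and tl2: "\<And>a. Vector_Spaces.linear sL sT (\<lambda>x. tens x a)"
    and spT: "module.span sT {tens x a |x a. True} = UNIV"
    and univ: "\<And>f :: 'l \<Rightarrow> 'a \<Rightarrow> complex. (\<forall>x. Vector_Spaces.linear sA (*) (f x)) \<Longrightarrow> (\<forall>a. Vector_Spaces.linear sL (*) (\<lambda>x. f x a))
        \<Longrightarrow> \<exists>h. Vector_Spaces.linear sT (*) h \<and> (\<forall>x a. h (tens x a) = f x a)"
    and Acomm: "\<And>c a b. sA c (a * b) = sA c a * b"
begin

interpretation L: vector_space sL by (rule vsL)
interpretation A: vector_space sA by (rule vsA)
interpretation T: vector_space sT by (rule vsT)

lemma tens_add1: "tens (x + y) a = tens x a + tens y a" using tl2[of a] by (simp add: Vector_Spaces.linear_iff)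
lemma tens_sc1: "tens (sL c x) a = sT c (tens x a)" using tl2[of a] by (simp add: Vector_Spaces.linear_iff)
lemma tens_add2: "tens x (a + b) = tens x a + tens x b" using tl1[of x] by (simp add: Vector_Spaces.linear_iff)
lemma tens_sc2: "tens x (sA c a) = sT c (tens x a)" using tl1[of x] by (simp add: Vector_Spaces.linear_iff)
lemma tens_0: "tens 0 a = 0" using tens_sc1[of 0 0 a] by simp
lemma tens_02: "tens x 0 = 0" using tens_sc2[of x 0 0] by simp

lemma inT: "t \<in> T.span {tens x a |x a. True}" using spT by auto

lemma lin_eq_tens:
  assumes "Vector_Spaces.linear sT s f" "Vector_Spaces.linear sT s h" "\<And>x a. f (tens x a) = h (tens x a)"
  shows "f t = h t"
  by (rule lin_eq_span[OF assms(1,2) _ inT]) (use assms(3) in auto)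

definition hh where "hh \<phi> g = (SOME h. Vector_Spaces.linear sT (*) h \<and> (\<forall>x a. h (tens x a) = \<phi> x * g a))"

lemma hh_prop:
  assumes "Vector_Spaces.linear sL (*) \<phi>" "Vector_Spaces.linear sA (*) g"
  shows "Vector_Spaces.linear sT (*) (hh \<phi> g) \<and> (\<forall>x a. hh \<phi> g (tens x a) = \<phi> x * g a)"
proof -
  have "\<exists>h. Vector_Spaces.linear sT (*) h \<and> (\<forall>x a. h (tens x a) = \<phi> x * g a)"
    by (rule univ) (use assms in \<open>auto simp: Vector_Spaces.linear_iff algebra_simps vs_mult\<close>)
  then show ?thesis unfolding hh_def by (rule someI_ex)
qed

lemma L_uniq:
  assumes "\<And>\<phi>. Vector_Spaces.linear sL (*) \<phi> \<Longrightarrow> \<phi> l1 = \<phi> l2" shows "l1 = l2"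
proof (rule ccontr)
  assume "l1 \<noteq> l2"
  then obtain \<phi> where p: "Vector_Spaces.linear sL (*) \<phi>" "\<phi> (l1 - l2) \<noteq> 0" using sep_fun[OF vsL, of "l1 - l2"] by auto
  have "\<phi> (l1 - l2) = \<phi> l1 - \<phi> l2" using p(1) by (metis add_diff_cancel diff_add_cancel Vector_Spaces.linear_iff)
  with p assms[OF p(1)] show False by simp
qed

definition Cf where "Cf g t = (THE l. \<forall>\<phi>. Vector_Spaces.linear sL (*) \<phi> \<longrightarrow> \<phi> l = hh \<phi> g t)"

lemma Cf_ex:
  assumes g: "Vector_Spaces.linear sA (*) g"
  shows "\<exists>l. \<forall>\<phi>. Vector_Spaces.linear sL (*) \<phi> \<longrightarrow> \<phi> l = hh \<phi> g t"
  using inT[of t]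
proof (induct rule: T.span_induct_alt)
  case base
  show ?case
  proof (intro exI[of _ 0] allI impI)
    fix \<phi> assume p: "Vector_Spaces.linear sL (*) \<phi>"
    have "\<phi> 0 = 0" using p by (metis add_cancel_right_left Vector_Spaces.linear_iff)
    moreover have "hh \<phi> g 0 = 0" using hh_prop[OF p g] by (metis add_cancel_right_left Vector_Spaces.linear_iff)
    ultimately show "\<phi> 0 = hh \<phi> g 0" by simp
  qed
next
  case (step c x y)
  then obtain x0 a where x: "x = tens x0 a" by auto
  from step obtain ly where ly: "\<forall>\<phi>. Vector_Spaces.linear sL (*) \<phi> \<longrightarrow> \<phi> ly = hh \<phi> g y" by auto
  show ?case
  proof (intro exI[of _ "sL c (sL (g a) x0) + ly"] allI impI)
    fix \<phi> assume p: "Vector_Spaces.linear sL (*) \<phi>"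
    have h: "Vector_Spaces.linear sT (*) (hh \<phi> g)" "hh \<phi> g (tens x0 a) = \<phi> x0 * g a" using hh_prop[OF p g] by auto
    show "\<phi> (sL c (sL (g a) x0) + ly) = hh \<phi> g (sT c x + y)"
      using p h ly by (simp add: Vector_Spaces.linear_iff x algebra_simps)
  qed
qed

lemma Cf_char:
  assumes g: "Vector_Spaces.linear sA (*) g" and p: "Vector_Spaces.linear sL (*) \<phi>"
  shows "\<phi> (Cf g t) = hh \<phi> g t"
proof -
  have "\<exists>!l. \<forall>\<phi>. Vector_Spaces.linear sL (*) \<phi> \<longrightarrow> \<phi> l = hh \<phi> g t"
    using Cf_ex[OF g] L_uniq by metis
  then have "\<forall>\<phi>. Vector_Spaces.linear sL (*) \<phi> \<longrightarrow> \<phi> (Cf g t) = hh \<phi> g t"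
    unfolding Cf_def by (rule theI')
  with p show ?thesis by auto
qed

lemma Cf_lin:
  assumes g: "Vector_Spaces.linear sA (*) g" shows "Vector_Spaces.linear sT sL (Cf g)"
  unfolding Vector_Spaces.linear_iff
proof (intro conjI allI vsT vsL)
  fix x y show "Cf g (x + y) = Cf g x + Cf g y"
  proof (rule L_uniq)
    fix \<phi> assume p: "Vector_Spaces.linear sL (*) \<phi>"
    show "\<phi> (Cf g (x + y)) = \<phi> (Cf g x + Cf g y)"
      using hh_prop[OF p g] p by (simp add: Cf_char[OF g p] Vector_Spaces.linear_iff)
  qed
next
  fix c x show "Cf g (sT c x) = sL c (Cf g x)"
  proof (rule L_uniq)
    fix \<phi> assume p: "Vector_Spaces.linear sL (*) \<phi>"
    show "\<phi> (Cf g (sT c x)) = \<phi> (sL c (Cf g x))"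
      using hh_prop[OF p g] p by (simp add: Cf_char[OF g p] Vector_Spaces.linear_iff)
  qed
qed

lemma Cf_tens:
  assumes g: "Vector_Spaces.linear sA (*) g" shows "Cf g (tens x a) = sL (g a) x"
proof (rule L_uniq)
  fix \<phi> assume p: "Vector_Spaces.linear sL (*) \<phi>"
  show "\<phi> (Cf g (tens x a)) = \<phi> (sL (g a) x)"
    using hh_prop[OF p g] p by (simp add: Cf_char[OF g p] Vector_Spaces.linear_iff mult.commute)
qed

lemma tens_sum2: "finite E \<Longrightarrow> tens x (\<Sum>e\<in>E. f e) = (\<Sum>e\<in>E. tens x (f e))"
  by (induct rule: finite_induct) (auto simp: tens_add2 tens_02)

lemma Cf_0: "Vector_Spaces.linear sA (*) g \<Longrightarrow> Cf g 0 = 0"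
  using Cf_lin[of g] by (metis add_cancel_right_left Vector_Spaces.linear_iff)

lemma Cf_sep:
  assumes H: "\<And>g. Vector_Spaces.linear sA (*) g \<Longrightarrow> Cf g t = 0" shows "t = 0"
proof -
  obtain BA where BA: "A.independent BA" "UNIV \<subseteq> A.span BA"
    using A.maximal_independent_subset_extend[of "{}" UNIV] A.independent_empty by auto
  then have sp: "A.span BA = UNIV" by auto
  define ge where "ge e = (\<lambda>a. A.representation BA a e)" for e
  have gl: "Vector_Spaces.linear sA (*) (ge e)" for e
    unfolding ge_def by (rule A.linear_representation[OF BA(1) sp])
  have Q: "\<exists>E. finite E \<and> (\<forall>e. e \<notin> E \<longrightarrow> Cf (ge e) t = 0) \<and> t = (\<Sum>e\<in>E. tens (Cf (ge e) t) e)"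
    using inT[of t]
  proof (induct rule: T.span_induct_alt)
    case base
    show ?case by (intro exI[of _ "{}"]) (simp add: Cf_0[OF gl])
  next
    case (step c x y)
    then obtain x0 a where x: "x = tens x0 a" by auto
    from step obtain E2 where E2: "finite E2" "\<forall>e. e \<notin> E2 \<longrightarrow> Cf (ge e) y = 0"
       "y = (\<Sum>e\<in>E2. tens (Cf (ge e) y) e)" by auto
    define E1 where "E1 = {e. ge e a \<noteq> 0}"
    have E1: "finite E1" unfolding E1_def ge_def by (rule A.finite_representation)
    have Cx: "Cf (ge e) (sT c x + y) = sL c (sL (ge e a) x0) + Cf (ge e) y" for e
      using Cf_lin[OF gl[of e]] by (simp add: Vector_Spaces.linear_iff x Cf_tens[OF gl])
    let ?E = "E1 \<union> E2"
    have "(\<Sum>e\<in>?E. tens (Cf (ge e) y) e) = (\<Sum>e\<in>E2. tens (Cf (ge e) y) e)"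
      using E2(1,2) E1 by (intro sum.mono_neutral_right) (auto simp: tens_0)
    then have s1: "(\<Sum>e\<in>?E. tens (Cf (ge e) y) e) = y" using E2(3) by simp
    have "(\<Sum>e\<in>?E. tens (sL (ge e a) x0) e) = (\<Sum>e\<in>E1. tens (sL (ge e a) x0) e)"
      using E2(1) E1 by (intro sum.mono_neutral_right) (auto simp: tens_0 E1_def)
    also have "\<dots> = (\<Sum>e\<in>E1. tens x0 (sA (ge e a) e))" by (simp add: tens_sc1 tens_sc2)
    also have "\<dots> = tens x0 (\<Sum>e\<in>E1. sA (ge e a) e)" by (simp add: tens_sum2[OF E1])
    also have "(\<Sum>e\<in>E1. sA (ge e a) e) = a"
      unfolding E1_def ge_def by (rule A.sum_nonzero_representation_eq[OF BA(1)]) (simp add: sp)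
    finally have s2: "(\<Sum>e\<in>?E. tens (sL (ge e a) x0) e) = x" by (simp add: x)
    have "(\<Sum>e\<in>?E. tens (Cf (ge e) (sT c x + y)) e)
        = sT c (\<Sum>e\<in>?E. tens (sL (ge e a) x0) e) + (\<Sum>e\<in>?E. tens (Cf (ge e) y) e)"
      by (simp add: Cx tens_add1 tens_sc1 sum.distrib T.scale_sum_right)
    also have "\<dots> = sT c x + y" using s1 s2 by simp
    finally show ?case using E1 E2 Cx
      by (intro exI[of _ ?E]) (auto simp: E1_def)
  qed
  then obtain E where "t = (\<Sum>e\<in>E. tens (Cf (ge e) t) e)" by auto
  then show ?thesis using H[OF gl] by (simp add: tens_0)
qed

end



definition Cent where
  "Cent sL br gr d \<theta> \<longleftrightarrow> (\<forall>i j. \<forall>x\<in>gr i. \<forall>y\<in>gr j. \<forall>m.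
     \<theta> (coeff (br x y) m) = sL (psign i d) (coeff (br x (\<theta> y)) m) \<and>
     \<theta> (coeff (br x y) m) = coeff (br (\<theta> x) y) m)"

locale cur2 = cur sL sA sT tens
  for sL :: "complex \<Rightarrow> 'l::ab_group_add \<Rightarrow> 'l" and sA :: "complex \<Rightarrow> 'a::comm_ring_1 \<Rightarrow> 'a"
    and sT :: "complex \<Rightarrow> 't::ab_group_add \<Rightarrow> 't" and tens :: "'l \<Rightarrow> 'a \<Rightarrow> 't" +
  fixes br :: "'l \<Rightarrow> 'l \<Rightarrow> 'l poly" and brT :: "'t \<Rightarrow> 't \<Rightarrow> 't poly"
    and gr :: "bool \<Rightarrow> 'l set" and d :: bool
  assumes brL1: "\<And>x. lin_to_poly sL sL (br x)" and brL2: "\<And>y. lin_to_poly sL sL (\<lambda>x. br x y)"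
    and brT1: "\<And>x. lin_to_poly sT sT (brT x)" and brT2: "\<And>y. lin_to_poly sT sT (\<lambda>x. brT x y)"
    and brT_tens: "\<And>x a y b. brT (tens x a) (tens y b) = map_poly (\<lambda>c. tens c (a * b)) (br x y)"
    and sub: "\<And>i. module.subspace sL (gr i)"
    and Hyp: "\<And>\<theta>. Vector_Spaces.linear sL sL \<theta> \<Longrightarrow> (\<And>i x. x \<in> gr i \<Longrightarrow> \<theta> x \<in> gr (i \<noteq> d))
        \<Longrightarrow> (\<And>x. br (\<theta> x) x = 0) \<Longrightarrow> Cent sL br gr d \<theta>"
begin

interpretation L: vector_space sL by (rule vsL)
interpretation A: vector_space sA by (rule vsA)
interpretation T: vector_space sT by (rule vsT)

definition gT where "gT i = T.span {tens x a | x a. x \<in> gr i}"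

lemma cL1: "coeff (br x (y + z)) n = coeff (br x y) n + coeff (br x z) n"
  using brL1[of x] by (simp add: lin_to_poly_def)
lemma cL1s: "coeff (br x (sL c y)) n = sL c (coeff (br x y) n)"
  using brL1[of x] by (simp add: lin_to_poly_def coeff_map_poly)
lemma cL2: "coeff (br (y + z) x) n = coeff (br y x) n + coeff (br z x) n"
  using brL2[of x] by (simp add: lin_to_poly_def)
lemma cL2s: "coeff (br (sL c y) x) n = sL c (coeff (br y x) n)"
  using brL2[of x] by (simp add: lin_to_poly_def coeff_map_poly)
lemma cT1: "coeff (brT x (y + z)) n = coeff (brT x y) n + coeff (brT x z) n"
  using brT1[of x] by (simp add: lin_to_poly_def)
lemma cT1s: "coeff (brT x (sT c y)) n = sT c (coeff (brT x y) n)"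
  using brT1[of x] by (simp add: lin_to_poly_def coeff_map_poly)
lemma cT2: "coeff (brT (y + z) x) n = coeff (brT y x) n + coeff (brT z x) n"
  using brT2[of x] by (simp add: lin_to_poly_def)
lemma cT2s: "coeff (brT (sT c y) x) n = sT c (coeff (brT y x) n)"
  using brT2[of x] by (simp add: lin_to_poly_def coeff_map_poly)
lemma bT2: "brT (y + z) x = brT y x + brT z x"
  using brT2[of x] by (simp add: lin_to_poly_def)
lemma bT1: "brT x (y + z) = brT x y + brT x z"
  using brT1[of x] by (simp add: lin_to_poly_def)
lemma cTt: "coeff (brT (tens x a) (tens y b)) n = tens (coeff (br x y) n) (a * b)"
  by (simp add: brT_tens coeff_map_poly tens_0)

lemma cL1d: "coeff (br x (y - z)) n = coeff (br x y) n - coeff (br x z) n"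
  by (metis add_diff_cancel cL1 diff_add_cancel)
lemma cL2d: "coeff (br (y - z) x) n = coeff (br y x) n - coeff (br z x) n"
  by (metis add_diff_cancel cL2 diff_add_cancel)

lemma linL1: "Vector_Spaces.linear sL sL (\<lambda>y. coeff (br x y) n)"
  by (simp add: Vector_Spaces.linear_iff vsL cL1 cL1s)
lemma linL2: "Vector_Spaces.linear sL sL (\<lambda>y. coeff (br y x) n)"
  by (simp add: Vector_Spaces.linear_iff vsL cL2 cL2s)
lemma linT1: "Vector_Spaces.linear sT sT (\<lambda>y. coeff (brT x y) n)"
  by (simp add: Vector_Spaces.linear_iff vsT cT1 cT1s)
lemma linT2: "Vector_Spaces.linear sT sT (\<lambda>y. coeff (brT y x) n)"
  by (simp add: Vector_Spaces.linear_iff vsT cT2 cT2s)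

lemma Cf_add: "Vector_Spaces.linear sA (*) g \<Longrightarrow> Cf g (x + y) = Cf g x + Cf g y"
  using Cf_lin by (simp add: Vector_Spaces.linear_iff)
lemma Cf_sc: "Vector_Spaces.linear sA (*) g \<Longrightarrow> Cf g (sT c x) = sL c (Cf g x)"
  using Cf_lin by (simp add: Vector_Spaces.linear_iff)

lemma C2:
  assumes g: "Vector_Spaces.linear sA (*) g"
  shows "Cf g (coeff (brT t (tens y b)) n) = coeff (br (Cf (\<lambda>z. g (z * b)) t) y) n"
proof (rule lin_eq_tens[where f="\<lambda>t. Cf g (coeff (brT t (tens y b)) n)"
      and h="\<lambda>t. coeff (br (Cf (\<lambda>z. g (z * b)) t) y) n"])
  show "Vector_Spaces.linear sT sL (\<lambda>t. Cf g (coeff (brT t (tens y b)) n))"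
    using g by (simp add: Vector_Spaces.linear_iff vsT vsL cT2 cT2s Cf_add Cf_sc)
  have g2: "Vector_Spaces.linear sA (*) (\<lambda>z. g (z * b))" by (rule lin_shift[OF vsA Acomm g])
  show "Vector_Spaces.linear sT sL (\<lambda>t. coeff (br (Cf (\<lambda>z. g (z * b)) t) y) n)"
    using g2 by (simp add: Vector_Spaces.linear_iff vsT vsL cL2 cL2s Cf_add Cf_sc)
  fix x a
  show "Cf g (coeff (brT (tens x a) (tens y b)) n) = coeff (br (Cf (\<lambda>z. g (z * b)) (tens x a)) y) n"
    by (simp add: cTt Cf_tens[OF g] Cf_tens[OF g2] cL2s)
qed

lemma C3:
  assumes g: "Vector_Spaces.linear sA (*) g"
  shows "Cf g (coeff (brT (tens y b) t) n) = coeff (br y (Cf (\<lambda>z. g (z * b)) t)) n"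
proof (rule lin_eq_tens[where f="\<lambda>t. Cf g (coeff (brT (tens y b) t) n)"
      and h="\<lambda>t. coeff (br y (Cf (\<lambda>z. g (z * b)) t)) n"])
  show "Vector_Spaces.linear sT sL (\<lambda>t. Cf g (coeff (brT (tens y b) t) n))"
    using g by (simp add: Vector_Spaces.linear_iff vsT vsL cT1 cT1s Cf_add Cf_sc)
  have g2: "Vector_Spaces.linear sA (*) (\<lambda>z. g (z * b))" by (rule lin_shift[OF vsA Acomm g])
  show "Vector_Spaces.linear sT sL (\<lambda>t. coeff (br y (Cf (\<lambda>z. g (z * b)) t)) n)"
    using g2 by (simp add: Vector_Spaces.linear_iff vsT vsL cL1 cL1s Cf_add Cf_sc)
  fix x a
  show "Cf g (coeff (brT (tens y b) (tens x a)) n) = coeff (br y (Cf (\<lambda>z. g (z * b)) (tens x a))) n"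
    by (simp add: cTt Cf_tens[OF g] Cf_tens[OF g2] cL1s mult.commute)
qed

lemma Cf_grad:
  assumes g: "Vector_Spaces.linear sA (*) g" and t: "t \<in> gT j"
  shows "Cf g t \<in> gr j"
  using t unfolding gT_def
proof (induct rule: T.span_induct_alt)
  case base then show ?case using Cf_0[OF g] L.subspace_0[OF sub] by simp
next
  case (step c x y)
  then obtain x0 a where x: "x = tens x0 a" "x0 \<in> gr j" by auto
  show ?case using step x
    by (simp add: Cf_add[OF g] Cf_sc[OF g] Cf_tens[OF g] L.subspace_add[OF sub] L.subspace_scale[OF sub])
qed

lemma tens_gT: "x \<in> gr i \<Longrightarrow> tens x a \<in> gT i"
  unfolding gT_def by (rule T.span_base) auto

end



context cur2 begin

interpretation L: vector_space sL by (rule vsL)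
interpretation T: vector_space sT by (rule vsT)

lemma Cent_diff:
  assumes "Cent sL br gr d \<theta>1" "Cent sL br gr d \<theta>2"
  shows "Cent sL br gr d (\<lambda>z. \<theta>1 z - \<theta>2 z)"
  unfolding Cent_def
proof (intro allI ballI)
  fix i j x y m assume x: "x \<in> gr i" and y: "y \<in> gr j"
  from assms x y have e1: "\<theta>1 (coeff (br x y) m) = sL (psign i d) (coeff (br x (\<theta>1 y)) m)"
     "\<theta>1 (coeff (br x y) m) = coeff (br (\<theta>1 x) y) m" unfolding Cent_def by blast+
  from assms x y have e2: "\<theta>2 (coeff (br x y) m) = sL (psign i d) (coeff (br x (\<theta>2 y)) m)"
     "\<theta>2 (coeff (br x y) m) = coeff (br (\<theta>2 x) y) m" unfolding Cent_def by blast+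
  have c1: "\<theta>1 (coeff (br x y) m) - \<theta>2 (coeff (br x y) m) = sL (psign i d) (coeff (br x (\<theta>1 y - \<theta>2 y)) m)"
    by (simp only: cL1d L.scale_right_diff_distrib e1(1) e2(1))
  have c2: "\<theta>1 (coeff (br x y) m) - \<theta>2 (coeff (br x y) m) = coeff (br (\<theta>1 x - \<theta>2 x) y) m"
    by (simp only: cL2d e1(2) e2(2))
  show "\<theta>1 (coeff (br x y) m) - \<theta>2 (coeff (br x y) m) = sL (psign i d) (coeff (br x (\<theta>1 y - \<theta>2 y)) m) \<and>
        \<theta>1 (coeff (br x y) m) - \<theta>2 (coeff (br x y) m) = coeff (br (\<theta>1 x - \<theta>2 x) y) m"
    using c1 c2 by (rule conjI)
qed

end

locale cur3 = cur2 sL sA sT tens br brT gr d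
  for sL :: "complex \<Rightarrow> 'l::ab_group_add \<Rightarrow> 'l" and sA :: "complex \<Rightarrow> 'a::comm_ring_1 \<Rightarrow> 'a"
    and sT :: "complex \<Rightarrow> 't::ab_group_add \<Rightarrow> 't" and tens :: "'l \<Rightarrow> 'a \<Rightarrow> 't"
    and br brT gr d +
  fixes P :: "'t \<Rightarrow> 't"
  assumes Pl: "Vector_Spaces.linear sT sT P"
    and Ph: "\<And>i u. u \<in> gT i \<Longrightarrow> P u \<in> gT (i \<noteq> d)"
    and Pc: "\<And>u. brT (P u) u = 0"
begin

interpretation L: vector_space sL by (rule vsL)
interpretation A: vector_space sA by (rule vsA)
interpretation T: vector_space sT by (rule vsT)

lemma P_add: "P (x + y) = P x + P y" using Pl by (simp add: Vector_Spaces.linear_iff)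
lemma P_sc: "P (sT c x) = sT c (P x)" using Pl by (simp add: Vector_Spaces.linear_iff)

lemma Pc2: "coeff (brT (P u) v) n = - coeff (brT (P v) u) n"
proof -
  have "brT (P (u + v)) (u + v) = 0" by (rule Pc)
  then have "brT (P v) u + brT (P u) v = 0"
    by (simp add: P_add bT1 bT2 Pc)
  then have "brT (P u) v + brT (P v) u = 0" by (simp add: add.commute)
  then have "coeff (brT (P u) v + brT (P v) u) n = 0" by simp
  then show ?thesis by (simp add: eq_neg_iff_add_eq_0)
qed

definition K where "K g c z = Cf g (P (tens z c))"

lemma K_lin: "Vector_Spaces.linear sA (*) g \<Longrightarrow> Vector_Spaces.linear sL sL (K g c)"
  by (simp add: Vector_Spaces.linear_iff vsL K_def tens_add1 tens_sc1 P_add P_sc Cf_add Cf_sc)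

lemma K_hom: assumes g: "Vector_Spaces.linear sA (*) g" and x: "x \<in> gr i"
  shows "K g c x \<in> gr (i \<noteq> d)"
  unfolding K_def by (rule Cf_grad[OF g Ph[OF tens_gT[OF x]]])

lemma Cf_neg: "Vector_Spaces.linear sA (*) g \<Longrightarrow> Cf g (- x) = - Cf g x"
  by (metis Cf_add Cf_0 add_eq_0_iff2 add.right_inverse)

lemma shift1: "(\<lambda>z. g (z * (1::'a))) = g" by (rule ext) simp

lemma CentK1:
  assumes g: "Vector_Spaces.linear sA (*) g" shows "Cent sL br gr d (K g 1)"
proof (rule Hyp)
  show "Vector_Spaces.linear sL sL (K g 1)" by (rule K_lin[OF g])
  show "\<And>i x. x \<in> gr i \<Longrightarrow> K g 1 x \<in> gr (i \<noteq> d)" by (rule K_hom[OF g])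
  fix x
  show "br (K g 1 x) x = 0"
  proof (rule poly_eqI)
    fix n
    have "coeff (br (K g 1 x) x) n = Cf g (coeff (brT (P (tens x 1)) (tens x 1)) n)"
      using C2[OF g, of "P (tens x 1)" x 1 n] by (simp add: K_def)
    also have "\<dots> = 0" by (simp add: Pc Cf_0[OF g])
    finally show "coeff (br (K g 1 x) x) n = coeff 0 n" by simp
  qed
qed

lemma Theta:
  assumes g: "Vector_Spaces.linear sA (*) g"
  shows "Cent sL br gr d (\<lambda>z. K (\<lambda>t. g (t * b)) a z + K (\<lambda>t. g (t * a)) b z)"
proof (rule Hyp)
  have g1: "Vector_Spaces.linear sA (*) (\<lambda>t. g (t * b))" by (rule lin_shift[OF vsA Acomm g])
  have g2: "Vector_Spaces.linear sA (*) (\<lambda>t. g (t * a))" by (rule lin_shift[OF vsA Acomm g])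
  show "Vector_Spaces.linear sL sL (\<lambda>z. K (\<lambda>t. g (t * b)) a z + K (\<lambda>t. g (t * a)) b z)"
    using K_lin[OF g1, of a] K_lin[OF g2, of b] by (simp add: Vector_Spaces.linear_iff algebra_simps L.scale_right_distrib)
  show "\<And>i x. x \<in> gr i \<Longrightarrow> K (\<lambda>t. g (t * b)) a x + K (\<lambda>t. g (t * a)) b x \<in> gr (i \<noteq> d)"
    by (rule L.subspace_add[OF sub], rule K_hom[OF g1], assumption, rule K_hom[OF g2], assumption)
  fix x
  show "br (K (\<lambda>t. g (t * b)) a x + K (\<lambda>t. g (t * a)) b x) x = 0"
  proof (rule poly_eqI)
    fix n
    have "coeff (br (K (\<lambda>t. g (t * b)) a x + K (\<lambda>t. g (t * a)) b x) x) n
       = Cf g (coeff (brT (P (tens x a)) (tens x b)) n) + Cf g (coeff (brT (P (tens x b)) (tens x a)) n)"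
      by (simp add: cL2 C2[OF g] K_def)
    also have "\<dots> = 0" using Pc2[of "tens x a" "tens x b" n] by (simp add: Cf_neg[OF g])
    finally show "coeff (br (K (\<lambda>t. g (t * b)) a x + K (\<lambda>t. g (t * a)) b x) x) n = coeff 0 n" by simp
  qed
qed

lemma CentK:
  assumes g: "Vector_Spaces.linear sA (*) g" shows "Cent sL br gr d (K g c)"
proof -
  have g2: "Vector_Spaces.linear sA (*) (\<lambda>t. g (t * c))" by (rule lin_shift[OF vsA Acomm g])
  have "Cent sL br gr d (\<lambda>z. (K (\<lambda>t. g (t * 1)) c z + K (\<lambda>t. g (t * c)) 1 z) - K (\<lambda>t. g (t * c)) 1 z)"
    by (rule Cent_diff[OF Theta[OF g] CentK1[OF g2]])
  then show ?thesis by (simp add: shift1)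
qed

lemma F2:
  assumes g: "Vector_Spaces.linear sA (*) g" and x: "x \<in> gr i" and y: "y \<in> gr j"
  shows "K g c (coeff (br x y) m) = K (\<lambda>z. g (z * c)) 1 (coeff (br x y) m)"
proof -
  have g2: "Vector_Spaces.linear sA (*) (\<lambda>t. g (t * c))" by (rule lin_shift[OF vsA Acomm g])
  have "K g c (coeff (br x y) m) = coeff (br (K g c x) y) m"
    using CentK[OF g, of c] x y unfolding Cent_def by blast
  also have "\<dots> = Cf g (coeff (brT (P (tens x c)) (tens y 1)) m)"
    using C2[OF g, of "P (tens x c)" y 1 m] by (simp add: K_def)
  also have "\<dots> = - Cf g (coeff (brT (P (tens y 1)) (tens x c)) m)"
    by (simp add: Pc2[of "tens x c"] Cf_neg[OF g])
  also have "\<dots> = - coeff (br (K (\<lambda>z. g (z * c)) 1 y) x) m"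
    by (simp add: C2[OF g] K_def)
  finally have e1: "K g c (coeff (br x y) m) = - coeff (br (K (\<lambda>z. g (z * c)) 1 y) x) m" .
  have "K (\<lambda>z. g (z * c)) 1 (coeff (br x y) m) = coeff (br (K (\<lambda>z. g (z * c)) 1 x) y) m"
    using CentK[OF g2, of 1] x y unfolding Cent_def by blast
  also have "\<dots> = Cf (\<lambda>z. g (z * c)) (coeff (brT (P (tens x 1)) (tens y 1)) m)"
    using C2[OF g2, of "P (tens x 1)" y 1 m] by (simp add: K_def)
  also have "\<dots> = - Cf (\<lambda>z. g (z * c)) (coeff (brT (P (tens y 1)) (tens x 1)) m)"
    by (simp add: Pc2[of "tens x 1"] Cf_neg[OF g2])
  also have "\<dots> = - coeff (br (K (\<lambda>z. g (z * c)) 1 y) x) m"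
    using C2[OF g2, of "P (tens y 1)" x 1 m] by (simp add: K_def)
  finally show ?thesis using e1 by simp
qed

end



context cur3 begin

interpretation L: vector_space sL by (rule vsL)
interpretation T: vector_space sT by (rule vsT)

lemma eq_by_Cf:
  assumes "\<And>g. Vector_Spaces.linear sA (*) g \<Longrightarrow> Cf g X = Cf g Y" shows "X = Y"
proof -
  have "X - Y = 0"
  proof (rule Cf_sep)
    fix g assume g: "Vector_Spaces.linear sA (*) g"
    have "Cf g (X - Y) = Cf g X + - Cf g Y" using Cf_add[OF g, of X "- Y"] Cf_neg[OF g, of Y] by simp
    then show "Cf g (X - Y) = 0" using assms[OF g] by simp
  qed
  then show ?thesis by simp
qed

lemma pure:
  assumes x: "x \<in> gr i" and y: "y \<in> gr j"
  shows "P (coeff (brT (tens x a) (tens y b)) m) = sT (psign i d) (coeff (brT (tens x a) (P (tens y b))) m)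
       \<and> P (coeff (brT (tens x a) (tens y b)) m) = coeff (brT (P (tens x a)) (tens y b)) m"
proof -
  define w where "w = coeff (br x y) m"
  have L: "Cf g (P (coeff (brT (tens x a) (tens y b)) m)) = K (\<lambda>z. g (z * (a * b))) 1 w"
    if g: "Vector_Spaces.linear sA (*) g" for g
  proof -
    have "Cf g (P (coeff (brT (tens x a) (tens y b)) m)) = K g (a * b) w"
      by (simp add: cTt K_def w_def)
    also have "\<dots> = K (\<lambda>z. g (z * (a * b))) 1 w" unfolding w_def by (rule F2[OF g x y])
    finally show ?thesis .
  qed
  have E1: "P (coeff (brT (tens x a) (tens y b)) m) = sT (psign i d) (coeff (brT (tens x a) (P (tens y b))) m)"
  proof (rule eq_by_Cf)
    fix g assume g: "Vector_Spaces.linear sA (*) g"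
    define g1 where "g1 = (\<lambda>z. g (z * a))"
    have g1: "Vector_Spaces.linear sA (*) g1" unfolding g1_def by (rule lin_shift[OF vsA Acomm g])
    have "Cf g (sT (psign i d) (coeff (brT (tens x a) (P (tens y b))) m))
        = sL (psign i d) (coeff (br x (K g1 b y)) m)"
      by (simp add: Cf_sc[OF g] C3[OF g] K_def g1_def)
    also have "\<dots> = K g1 b w"
      using CentK[OF g1, of b] x y unfolding Cent_def w_def by metis
    also have "\<dots> = K (\<lambda>z. g1 (z * b)) 1 w" unfolding w_def by (rule F2[OF g1 x y])
    also have "(\<lambda>z. g1 (z * b)) = (\<lambda>z. g (z * (a * b)))" unfolding g1_def
      by (rule ext) (simp add: ac_simps)
    finally show "Cf g (P (coeff (brT (tens x a) (tens y b)) m)) =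
        Cf g (sT (psign i d) (coeff (brT (tens x a) (P (tens y b))) m))" using L[OF g] by simp
  qed
  have E2: "P (coeff (brT (tens x a) (tens y b)) m) = coeff (brT (P (tens x a)) (tens y b)) m"
  proof (rule eq_by_Cf)
    fix g assume g: "Vector_Spaces.linear sA (*) g"
    define g1 where "g1 = (\<lambda>z. g (z * b))"
    have g1: "Vector_Spaces.linear sA (*) g1" unfolding g1_def by (rule lin_shift[OF vsA Acomm g])
    have "Cf g (coeff (brT (P (tens x a)) (tens y b)) m) = coeff (br (K g1 a x) y) m"
      by (simp add: C2[OF g] K_def g1_def)
    also have "\<dots> = K g1 a w"
      using CentK[OF g1, of a] x y unfolding Cent_def w_def by metis
    also have "\<dots> = K (\<lambda>z. g1 (z * a)) 1 w" unfolding w_def by (rule F2[OF g1 x y])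
    also have "(\<lambda>z. g1 (z * a)) = (\<lambda>z. g (z * (a * b)))" unfolding g1_def
      by (rule ext) (simp add: ac_simps)
    finally show "Cf g (P (coeff (brT (tens x a) (tens y b)) m)) =
        Cf g (coeff (brT (P (tens x a)) (tens y b)) m)" using L[OF g] by simp
  qed
  show ?thesis using E1 E2 by simp
qed

lemma linsc: "Vector_Spaces.linear sT sT f \<Longrightarrow> Vector_Spaces.linear sT sT (\<lambda>t. sT c (f t))"
  by (simp add: Vector_Spaces.linear_iff T.scale_right_distrib T.scale_left_commute)

lemma lincomp: "Vector_Spaces.linear sT sT f \<Longrightarrow> Vector_Spaces.linear sT sT h \<Longrightarrow> Vector_Spaces.linear sT sT (\<lambda>t. f (h t))"
  by (simp add: Vector_Spaces.linear_iff)

lemma mainT: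
  assumes u: "u \<in> gT i" and v: "v \<in> gT j"
  shows "P (coeff (brT u v) m) = sT (psign i d) (coeff (brT u (P v)) m)
       \<and> P (coeff (brT u v) m) = coeff (brT (P u) v) m"
proof -
  have step1: "P (coeff (brT u' (tens y b)) m) = sT (psign i d) (coeff (brT u' (P (tens y b))) m)
       \<and> P (coeff (brT u' (tens y b)) m) = coeff (brT (P u') (tens y b)) m"
    if u': "u' \<in> gT i" and y: "y \<in> gr j" for u' y b
  proof
    show "P (coeff (brT u' (tens y b)) m) = sT (psign i d) (coeff (brT u' (P (tens y b))) m)"
      by (rule lin_eq_span[where f="\<lambda>u. P (coeff (brT u (tens y b)) m)"
          and h="\<lambda>u. sT (psign i d) (coeff (brT u (P (tens y b))) m)"
          and S="{tens x a | x a. x \<in> gr i}"])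
        (use u' pure[OF _ y, THEN conjunct1] in \<open>auto simp: gT_def intro: lincomp Pl linT2 linsc\<close>)
    show "P (coeff (brT u' (tens y b)) m) = coeff (brT (P u') (tens y b)) m"
      by (rule lin_eq_span[where f="\<lambda>u. P (coeff (brT u (tens y b)) m)"
          and h="\<lambda>u. coeff (brT (P u) (tens y b)) m"
          and S="{tens x a | x a. x \<in> gr i}"])
        (use u' pure[OF _ y, THEN conjunct2] in \<open>auto simp: gT_def intro: lincomp Pl linT2 linsc\<close>)
  qed
  show ?thesis
  proof
    show "P (coeff (brT u v) m) = sT (psign i d) (coeff (brT u (P v)) m)"
      by (rule lin_eq_span[where f="\<lambda>v. P (coeff (brT u v) m)"
          and h="\<lambda>v. sT (psign i d) (coeff (brT u (P v)) m)"
          and S="{tens x a | x a. x \<in> gr j}"])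
        (use v step1[OF u, THEN conjunct1] linsc[OF lincomp[OF linT1 Pl]] in \<open>auto simp: gT_def intro: lincomp Pl linT1 linsc\<close>)
    show "P (coeff (brT u v) m) = coeff (brT (P u) v) m"
      by (rule lin_eq_span[where f="\<lambda>v. P (coeff (brT u v) m)"
          and h="\<lambda>v. coeff (brT (P u) v) m"
          and S="{tens x a | x a. x \<in> gr j}"])
        (use v step1[OF u, THEN conjunct2] in \<open>auto simp: gT_def intro: lincomp Pl linT1 linsc\<close>)
  qed
qed

end



lemma br_shift_zero:
  assumes vs: "vector_space s" and H: "\<And>n m. br_shift s br P z n m = 0"
  shows "coeff (br (coeff P k) z) j = 0"
proof (induct k arbitrary: j rule: less_induct)
  case (less k)
  interpret v: vector_space s by (rule vs)
  have "br_shift s br P z k j = (\<Sum>i<k. s (of_nat ((k - i + j) choose j)) (coeff (br (coeff P i) z) (k - i + j)))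
        + s (of_nat ((k - k + j) choose j)) (coeff (br (coeff P k) z) (k - k + j))"
    unfolding br_shift_def lessThan_Suc_atMost[symmetric] by (rule sum.lessThan_Suc)
  also have "(\<Sum>i<k. s (of_nat ((k - i + j) choose j)) (coeff (br (coeff P i) z) (k - i + j))) = 0"
    using less by (intro sum.neutral) auto
  finally show ?case using H[of k j] by simp
qed

theorem mainTheorem9:
  fixes sL :: "complex \<Rightarrow> 'l::ab_group_add \<Rightarrow> 'l"
    and D :: "'l \<Rightarrow> 'l"
    and g :: "bool \<Rightarrow> 'l set"
    and br :: "'l \<Rightarrow> 'l \<Rightarrow> 'l poly"
    and sA :: "complex \<Rightarrow> 'a::comm_ring_1 \<Rightarrow> 'a"
    and sT :: "complex \<Rightarrow> 't::ab_group_add \<Rightarrow> 't"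
    and tens :: "'l \<Rightarrow> 'a \<Rightarrow> 't"
    and DT :: "'t \<Rightarrow> 't"
    and brT :: "'t \<Rightarrow> 't \<Rightarrow> 't poly"
  assumes L: "lie_conf_superalg sL D g br"
    and Z: "centralizer br (derived sL br) = {0}"
    and A: "comm_algebra sA"
    and T: "tensor_product sL sA sT tens"
    and C: "current_structure sL D br sT tens DT brT"
    and H: "\<forall>d Psi. super_commuting sL g br d Psi \<longrightarrow> in_centroid sL g br d Psi"
  shows "\<forall>d Psi. super_commuting sT (current_grading sT tens g) brT d Psi
                 \<longrightarrow> in_centroid sT (current_grading sT tens g) brT d Psi"
proof (intro allI impI)
  fix d Psi
  assume SC: "super_commuting sT (current_grading sT tens g) brT d Psi"
  have vsL: "vector_space sL" using L by (simp add: lie_conf_superalg_def)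
  have brL1: "\<And>x. lin_to_poly sL sL (br x)" and brL2: "\<And>y. lin_to_poly sL sL (\<lambda>x. br x y)"
    using L by (auto simp: lie_conf_superalg_def)
  have sub: "\<And>i. module.subspace sL (g i)"
    using L unfolding lie_conf_superalg_def by (metis (full_types))
  interpret Lv: vector_space sL by (rule vsL)
  have cur: "cur sL sA sT tens"
    using T A unfolding tensor_product_def comm_algebra_def cur_def by blast
  have br0: "br 0 y = 0" for y using brL2[of y] unfolding lin_to_poly_def
    by (metis add_cancel_right_left)
  have Hyp: "Cent sL br g d \<theta>"
    if tl: "Vector_Spaces.linear sL sL \<theta>" and th: "\<And>i x. x \<in> g i \<Longrightarrow> \<theta> x \<in> g (i \<noteq> d)"
      and tc: "\<And>x. br (\<theta> x) x = 0" for \<theta>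
  proof -
    define Q where "Q x = [:\<theta> x:]" for x
    have "super_commuting sL g br d Q"
      unfolding super_commuting_def
    proof (intro conjI)
      have mp: "map_poly (sL c) [:a:] = [:sL c a:]" for c a
        by (rule poly_eqI) (simp add: coeff_map_poly coeff_pCons split: nat.split)
      show "lin_to_poly sL sL Q" using tl
        by (simp add: lin_to_poly_def Q_def Vector_Spaces.linear_iff mp)
      show "homog_deg g d Q" unfolding homog_deg_def
      proof (intro allI ballI)
        fix i x n assume x: "x \<in> g i"
        show "coeff (Q x) n \<in> g (i \<noteq> d)"
          using th[OF x] Lv.subspace_0[OF sub] by (cases n) (auto simp: Q_def)
      qed
      show "\<forall>u n m. br_shift sL br (Q u) u n m = 0"
      proof (intro allI)
        fix u n m
        have "coeff (br (coeff (Q u) k) u) j = 0" for k j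
          using tc[of u] br0 by (cases k) (auto simp: Q_def)
        then show "br_shift sL br (Q u) u n m = 0" unfolding br_shift_def by simp
      qed
    qed
    then have "in_centroid sL g br d Q" using H by blast
    then show ?thesis unfolding in_centroid_def Cent_def
      by (metis Q_def coeff_pCons_0)
  qed
  have cur2: "cur2 sL sA sT tens br brT g d"
    unfolding cur2_def cur2_axioms_def
    using cur brL1 brL2 sub Hyp C unfolding current_structure_def by blast
  have Plin: "lin_to_poly sT sT Psi" and Phom: "homog_deg (current_grading sT tens g) d Psi"
    and Pbs: "\<And>u n m. br_shift sT brT (Psi u) u n m = 0"
    using SC unfolding super_commuting_def by auto
  have vsT: "vector_space sT" using T by (simp add: tensor_product_def)
  interpret Tv: vector_space sT by (rule vsT)
  have key: "\<And>i j. \<forall>x\<in>current_grading sT tens g i. \<forall>y\<in>current_grading sT tens g j.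
        coeff (Psi (coeff (brT x y) m)) n = sT (psign i d) (coeff (brT x (coeff (Psi y) n)) m) \<and>
        coeff (Psi (coeff (brT x y) m)) n = coeff (brT (coeff (Psi x) n) y) m" for n m
  proof -
    have cur3: "cur3 sL sA sT tens br brT g d (\<lambda>u. coeff (Psi u) n)"
      unfolding cur3_def cur3_axioms_def
    proof (intro conjI allI impI cur2)
      show "Vector_Spaces.linear sT sT (\<lambda>u. coeff (Psi u) n)"
        using Plin vsT by (simp add: lin_to_poly_def Vector_Spaces.linear_iff coeff_map_poly)
      fix i u assume "u \<in> cur2.gT sT tens g i"
      then show "coeff (Psi u) n \<in> cur2.gT sT tens g (i \<noteq> d)"
        using Phom unfolding cur2.gT_def[OF cur2] homog_deg_def current_grading_def by blast
    next
      fix u show "brT (coeff (Psi u) n) u = 0"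
        by (rule poly_eqI) (simp add: br_shift_zero[OF vsT Pbs])
    qed
    interpret c3: cur3 sL sA sT tens br brT g d "\<lambda>u. coeff (Psi u) n" by (rule cur3)
    show "\<And>i j. ?thesis i j"
      using c3.mainT unfolding c3.gT_def current_grading_def by blast
  qed
  show "in_centroid sT (current_grading sT tens g) brT d Psi"
    unfolding in_centroid_def using Plin Phom key by blast
qed


end
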